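(* Let $P,Q\in\Gamma_n$ and $0<r\le R$ with $r\le p_i/q_i\le R$ for all $i$. Let $s,t\in\mathbb{R}$ with $2\le s\le4$ and $2\le t\le4$. Then $$\frac{1}{R^{s+1}}\Big(\frac{R+1}{2}\Big)^{s-t}\frac{(4-s)R+s}{tR+4-t}\,\zeta_t(P\|Q)\le\zeta_s(Q\|P)\le\frac{1}{r^{s+1}}\Big(\frac{r+1}{2}\Big)^{s-t}\frac{(4-s)r+s}{tr+4-t}\,\zeta_t(P\|Q).$$
   Context: $\Gamma_n=\{P=(p_1,\dots,p_n): p_i>0,\ \sum_i p_i=1\}$, $n\ge2$. For $P,Q\in\Gamma_n$ and $s\in\mathbb{R}$: $\zeta_s(P\|Q)=(s-1)^{-1}\sum_i(p_i-q_i)\big(\frac{p_i+q_i}{2q_i}\big)^{s-1}$ for $s\ne1$; $\zeta_1(P\|Q)=\sum_i(p_i-q_i)\ln\frac{p_i+q_i}{2q_i}$. $\zeta_s(Q\|P)$ is obtained by interchanging $p_i$ and $q_i$. *)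

theory Defs
  imports Complex_Main
begin

definition Gamma :: "nat \<Rightarrow> (nat \<Rightarrow> real) set" where
  "Gamma n = {p. (\<forall>i<n. p i > 0) \<and> (\<Sum>i<n. p i) = 1}"

definition zeta :: "nat \<Rightarrow> real \<Rightarrow> (nat \<Rightarrow> real) \<Rightarrow> (nat \<Rightarrow> real) \<Rightarrow> real" where
  "zeta n s p q =
     (if s = 1 then (\<Sum>i<n. (p i - q i) * ln ((p i + q i) / (2 * q i)))
      else (1 / (s - 1)) * (\<Sum>i<n. (p i - q i) * ((p i + q i) / (2 * q i)) powr (s - 1)))"

end

theory Submission
  imports Defs "HOL-Analysis.Convex"
begin


lemma pw1: "y > 0 \<Longrightarrow> y powr (e + 1) = y powr e * (y::real)"
  by (simp add: powr_add)

lemma dpow1: "x > -1 \<Longrightarrow> ((\<lambda>x. (1+x) powr b) has_real_derivative b*(1+x) powr (b-1)) (at (x::real))"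
  using DERIV_fun_powr[of "\<lambda>x. 1+x" 1 x b] by (auto intro!: derivative_eq_intros)

lemma dF: assumes "x > 0"
  shows "((\<lambda>x. (1 - x) * (1 + x) powr a * x powr (-a)) has_real_derivative
     (-((1 + x) powr (a - 1) * x powr (-a - 1) * (x^2 + (1 - a) * x + a)))) (at x)"
proof -
  have e1: "(1+x) powr a = (1+x) powr (a-1) * (1+x)" using assms pw1[of "1+x" "a-1"] by simp
  have e2: "x powr (-a) = x powr (-a-1) * x" using assms pw1[of "x" "-a-1"] by simp
  have d1: "((\<lambda>x. 1 - x) has_real_derivative -1) (at x)" by (auto intro!: derivative_eq_intros)
  have d2: "((\<lambda>x. (1+x) powr a) has_real_derivative a*(1+x) powr (a-1)) (at x)" using assms by (intro dpow1) auto
  have d3: "((\<lambda>x. x powr (-a)) has_real_derivative (-a)*x powr (-a-1)) (at x)" by (rule has_real_derivative_powr[OF assms])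
  from DERIV_mult[OF DERIV_mult[OF d1 d2] d3] show ?thesis
    apply (rule DERIV_cong)
    apply (simp only: e1 e2)
    apply (simp add: algebra_simps power2_eq_square)
    done
qed

lemma dF2: assumes "x > 0"
  shows "((\<lambda>x. -((1 + x) powr (a - 1) * x powr (-a - 1) * (x^2 + (1 - a) * x + a))) has_real_derivative
     (1 + x) powr (a - 2) * x powr (-a - 2) * a * ((3 - a) * x + (a + 1))) (at x)"
proof -
  have e1: "(1+x) powr (a-1) = (1+x) powr (a-2) * (1+x)" using assms pw1[of "1+x" "a-2"] by simp
  have e2: "x powr (-a-1) = x powr (-a-2) * x"
  proof -
    have "x powr (-a-1) = x powr ((-a-2)+1)" by (rule arg_cong[where f="\<lambda>e. x powr e"]) simp
    also have "\<dots> = x powr (-a-2) * x" by (rule pw1[OF assms])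
    finally show ?thesis .
  qed
  have d1: "((\<lambda>x. x^2 + (1 - a) * x + a) has_real_derivative 2*x + (1-a)) (at x)" by (auto intro!: derivative_eq_intros)
  have d2: "((\<lambda>x. (1+x) powr (a-1)) has_real_derivative (a-1)*(1+x) powr (a-1-1)) (at x)" using assms by (intro dpow1) auto
  have d3: "((\<lambda>x. x powr (-a-1)) has_real_derivative (-a-1)*x powr (-a-1-1)) (at x)" by (rule has_real_derivative_powr[OF assms])
  from DERIV_minus[OF DERIV_mult[OF DERIV_mult[OF d2 d3] d1]] show ?thesis
    apply (rule DERIV_cong)
    apply (simp only: e1 e2 diff_diff_eq)
    apply (simp add: algebra_simps power2_eq_square)
    done
qed

lemma dG: assumes "x > 0"
  shows "((\<lambda>x. (x - 1) * (1 + x) powr (t - 1)) has_real_derivative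
     (1 + x) powr (t - 2) * (t * x + 2 - t)) (at x)"
proof -
  have e1: "(1+x) powr (t-1) = (1+x) powr (t-2) * (1+x)"
  proof -
    have "(1+x) powr (t-1) = (1+x) powr ((t-2)+1)" by (rule arg_cong[where f="\<lambda>e. (1+x) powr e"]) simp
    also have "\<dots> = (1+x) powr (t-2) * (1+x)" by (rule pw1) (use assms in auto)
    finally show ?thesis .
  qed
  have d1: "((\<lambda>x. x - 1) has_real_derivative 1) (at x)" by (auto intro!: derivative_eq_intros)
  have d2: "((\<lambda>x. (1+x) powr (t-1)) has_real_derivative (t-1)*(1+x) powr (t-1-1)) (at x)" using assms by (intro dpow1) auto
  from DERIV_mult[OF d1 d2] show ?thesis
    apply (rule DERIV_cong)
    apply (simp only: e1 diff_diff_eq)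
    apply (simp add: algebra_simps power2_eq_square)
    done
qed

lemma dG2: assumes "x > 0"
  shows "((\<lambda>x. (1 + x) powr (t - 2) * (t * x + 2 - t)) has_real_derivative
     (1 + x) powr (t - 3) * (t - 1) * (t * x + 4 - t)) (at x)"
proof -
  have e1: "(1+x) powr (t-2) = (1+x) powr (t-3) * (1+x)"
  proof -
    have "(1+x) powr (t-2) = (1+x) powr ((t-3)+1)" by (rule arg_cong[where f="\<lambda>e. (1+x) powr e"]) simp
    also have "\<dots> = (1+x) powr (t-3) * (1+x)" by (rule pw1) (use assms in auto)
    finally show ?thesis .
  qed
  have d1: "((\<lambda>x. t * x + 2 - t) has_real_derivative t) (at x)" by (auto intro!: derivative_eq_intros)
  have d2: "((\<lambda>x. (1+x) powr (t-2)) has_real_derivative (t-2)*(1+x) powr (t-2-1)) (at x)" using assms by (intro dpow1) auto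
  from DERIV_mult[OF d2 d1] show ?thesis
    apply (rule DERIV_cong)
    apply (simp only: e1 diff_diff_eq)
    apply (simp add: algebra_simps power2_eq_square)
    done
qed


definition phi :: "real \<Rightarrow> real \<Rightarrow> real \<Rightarrow> real" where
  "phi s t x = (1 / x powr (s + 1)) * ((x + 1) / 2) powr (s - t) * (((4 - s) * x + s) / (t * x + 4 - t))"

lemma phi_mono: assumes "0 < x" "x \<le> y" "2 \<le> s" "s \<le> 4" "2 \<le> t" "t \<le> 4"
  shows "phi s t y \<le> phi s t x"
proof -
  have y0: "y > 0" using assms by linarith
  have ty: "t * y > 0" "t * x > 0" using assms y0 by simp_all
  have sy: "(4 - s) * y \<ge> 0" "(4 - s) * x \<ge> 0" using assms y0 by simp_all
  have by0: "t * y + 4 - t > 0" "t * x + 4 - t > 0" using ty assms by linarith+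
  have AB: "((4 - s) * y + s) / (t * y + 4 - t) \<le> ((4 - s) * x + s) / (t * x + 4 - t)"
  proof -
    have "((4 - s) * y + s) * (t * x + 4 - t) \<le> ((4 - s) * x + s) * (t * y + 4 - t)"
    proof -
      have "((4 - s) * x + s) * (t * y + 4 - t) - ((4 - s) * y + s) * (t * x + 4 - t) = (y - x) * (4 * s + 4 * t - 16)"
        by (simp add: algebra_simps)
      moreover have "(y - x) * (4 * s + 4 * t - 16) \<ge> 0" using assms by simp
      ultimately show ?thesis by linarith
    qed
    then show ?thesis using by0 by (simp add: divide_simps)
  qed
  have ABpos: "((4 - s) * y + s) / (t * y + 4 - t) \<ge> 0" using sy by0 assms
    by (intro divide_nonneg_nonneg) linarith+
  have P: "(1 / y powr (s + 1)) * ((y + 1) / 2) powr (s - t) \<le> (1 / x powr (s + 1)) * ((x + 1) / 2) powr (s - t)"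
  proof (cases "s \<ge> t")
    case True
    have eq: "(1 / z powr (s + 1)) * ((z + 1) / 2) powr (s - t) = ((z + 1) / (2 * z)) powr (s - t) / z powr (t + 1)"
      if "z > 0" for z :: real
    proof -
      have "z powr (s + 1) = z powr (s - t) * z powr (t + 1)" using that by (simp add: powr_add[symmetric])
      then show ?thesis using that by (simp add: powr_divide powr_mult)
    qed
    have "(y + 1) / (2 * y) \<le> (x + 1) / (2 * x)" using assms y0 by (simp add: divide_simps algebra_simps)
    then have "((y + 1) / (2 * y)) powr (s - t) \<le> ((x + 1) / (2 * x)) powr (s - t)"
      using assms True y0 by (intro powr_mono2) auto
    moreover have "x powr (t + 1) \<le> y powr (t + 1)" using assms by (intro powr_mono2) auto
    ultimately show ?thesis unfolding eq[OF assms(1)] eq[OF y0] using assms y0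
      by (intro frac_le) auto
  next
    case False
    have "1 / y powr (s + 1) \<le> 1 / x powr (s + 1)" using assms
      by (intro divide_left_mono powr_mono2) auto
    moreover have "((y + 1) / 2) powr (s - t) \<le> ((x + 1) / 2) powr (s - t)"
      using assms False by (intro powr_mono2') auto
    ultimately show ?thesis using assms by (intro mult_mono) auto
  qed
  show ?thesis unfolding phi_def by (rule mult_mono[OF P AB]) (use assms ABpos in auto)
qed

lemma aux: fixes sm tm P2 Q2 B X V W A :: real
  shows "sm \<noteq> 0 \<Longrightarrow> tm \<noteq> 0 \<Longrightarrow> P2 \<noteq> 0 \<Longrightarrow> Q2 \<noteq> 0 \<Longrightarrow> B \<noteq> 0 \<Longrightarrow> X \<noteq> 0 \<Longrightarrow>
    1 / (sm * (P2 * Q2)) * (V * W * (1 / X) * sm * A) = 1 / X * (V / P2) * (A / B) * (1 / (tm * Q2)) * (W * tm * B)"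
  by (simp add: field_simps)

lemma Fdd: assumes x: "x > 0" and s: "s \<noteq> 1" and that: "t \<noteq> 1" "t * x + 4 - t \<noteq> 0"
  shows "(1 / ((s - 1) * 2 powr (s - 1))) * ((1 + x) powr (s - 1 - 2) * x powr (- (s - 1) - 2) * (s - 1) * ((3 - (s - 1)) * x + ((s - 1) + 1)))
     = phi s t x * (1 / ((t - 1) * 2 powr (t - 1))) * ((1 + x) powr (t - 3) * (t - 1) * (t * x + 4 - t))"
proof -
  have e1: "x powr (- (s - 1) - 2) = 1 / x powr (s + 1)"
  proof -
    have "x powr (- (s - 1) - 2) = x powr (- (s + 1))" by (rule arg_cong[where f="\<lambda>e. x powr e"]) simp
    also have "\<dots> = 1 / x powr (s + 1)" by (rule powr_minus_divide)
    finally show ?thesis .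
  qed
  have e2: "((x + 1) / 2) powr (s - t) = (1 + x) powr (s - t) / 2 powr (s - t)"
    using x by (simp add: powr_divide add.commute)
  have e3: "(1 + x) powr (s - 1 - 2) = (1 + x) powr (s - t) * (1 + x) powr (t - 3)"
    using x by (simp add: powr_add[symmetric])
  have e4: "2 powr (s - 1) = 2 powr (s - t) * (2::real) powr (t - 1)"
    by (simp add: powr_add[symmetric])
  have pos: "x powr (s + 1) > 0" "(1 + x) powr (s - t) > 0" "(1 + x) powr (t - 3) > 0" "(2::real) powr (s - t) > 0" "(2::real) powr (t - 1) > 0"
    using x by auto
  have A: "(3 - (s - 1)) * x + ((s - 1) + 1) = (4 - s) * x + s" by simp
  show ?thesis unfolding phi_def e1 e2 e3 e4 A
    by (rule aux) (use pos s that in auto)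
qed

theorem theorem4p1:
  fixes n :: nat and p q :: "nat \<Rightarrow> real" and r R s t :: real
  assumes "n \<ge> 2"
    and "p \<in> Gamma n" and "q \<in> Gamma n"
    and "0 < r" and "r \<le> R"
    and "\<And>i. i < n \<Longrightarrow> r \<le> p i / q i \<and> p i / q i \<le> R"
    and "2 \<le> s" and "s \<le> 4" and "2 \<le> t" and "t \<le> 4"
  shows "(1 / R powr (s + 1)) * ((R + 1) / 2) powr (s - t) * (((4 - s) * R + s) / (t * R + 4 - t))
           * zeta n t p q \<le> zeta n s q p \<and>
         zeta n s q p \<le> (1 / r powr (s + 1)) * ((r + 1) / 2) powr (s - t)
           * (((4 - s) * r + s) / (t * r + 4 - t)) * zeta n t p q"
proof -
  note ab = assms(7-10)
  have pp: "\<And>i. i < n \<Longrightarrow> p i > 0" and sp: "(\<Sum>i<n. p i) = 1" using assms(2) by (auto simp: Gamma_def)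
  have qp: "\<And>i. i < n \<Longrightarrow> q i > 0" and sq: "(\<Sum>i<n. q i) = 1" using assms(3) by (auto simp: Gamma_def)
  define x where "x i = p i / q i" for i
  have xC: "x i \<in> {r..R}" if "i < n" for i using assms(6)[OF that] by (auto simp: x_def)
  define F where "F y = (1 - y) * (1 + y) powr (s - 1) * y powr (- (s - 1))" for y :: real
  define G where "G y = (y - 1) * (1 + y) powr (t - 1)" for y :: real
  define cF where "cF = 1 / ((s - 1) * 2 powr (s - 1))"
  define cG where "cG = 1 / ((t - 1) * 2 powr (t - 1))"
  have s1: "s \<noteq> 1" "s - 1 > 0" and t1: "t \<noteq> 1" "t - 1 > 0" using ab by auto
  have cG0: "cG > 0" unfolding cG_def using t1 by auto
  have Z1: "zeta n s q p = (\<Sum>i<n. q i * (cF * F (x i)))"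
  proof -
    have "zeta n s q p = (\<Sum>i<n. (1 / (s - 1)) * ((q i - p i) * ((q i + p i) / (2 * q i * (p i / q i))) powr (s - 1)))"
      unfolding zeta_def using s1 by (auto simp: sum_distrib_left intro!: sum.cong) (metis qp less_irrefl)
    also have "\<dots> = (\<Sum>i<n. q i * (cF * F (x i)))"
    proof (rule sum.cong[OF refl])
      fix i assume "i \<in> {..<n}"
      then have qi: "q i > 0" and pi: "p i > 0" using qp pp by auto
      have xi: "x i > 0" using qi pi by (simp add: x_def)
      have a: "q i - p i = q i * (1 - x i)" using qi by (simp add: x_def field_simps)
      have b: "(q i + p i) / (2 * q i * (p i / q i)) = (1 + x i) / (2 * x i)" using qi pi by (simp add: x_def field_simps)
      have c: "((1 + x i) / (2 * x i)) powr (s - 1) = (1 + x i) powr (s - 1) * x i powr (- (s - 1)) / 2 powr (s - 1)"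
      proof -
        have c1: "((1 + x i) / (2 * x i)) powr (s - 1) = (1 + x i) powr (s - 1) / (2 powr (s - 1) * x i powr (s - 1))"
          using xi by (simp add: powr_divide powr_mult)
        have c2: "x i powr (- (s - 1)) = 1 / x i powr (s - 1)" by (rule powr_minus_divide)
        show ?thesis unfolding c1 c2 by simp
      qed
      show "(1 / (s - 1)) * ((q i - p i) * ((q i + p i) / (2 * q i * (p i / q i))) powr (s - 1)) = q i * (cF * F (x i))"
        unfolding a b c F_def cF_def by simp
    qed
    finally show ?thesis .
  qed
  have Z2: "zeta n t p q = (\<Sum>i<n. q i * (cG * G (x i)))"
  proof -
    have "zeta n t p q = (\<Sum>i<n. (1 / (t - 1)) * ((p i - q i) * ((p i + q i) / (2 * q i)) powr (t - 1)))"
      unfolding zeta_def using t1 by (auto simp: sum_distrib_left)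
    also have "\<dots> = (\<Sum>i<n. q i * (cG * G (x i)))"
    proof (rule sum.cong[OF refl])
      fix i assume "i \<in> {..<n}"
      then have qi: "q i > 0" and pi: "p i > 0" using qp pp by auto
      have xi: "x i > 0" using qi pi by (simp add: x_def)
      have a: "p i - q i = q i * (x i - 1)" using qi by (simp add: x_def field_simps)
      have b: "(p i + q i) / (2 * q i) = (1 + x i) / 2" using qi by (simp add: x_def field_simps)
      have c: "((1 + x i) / 2) powr (t - 1) = (1 + x i) powr (t - 1) / 2 powr (t - 1)"
        using xi by (simp add: powr_divide)
      show "(1 / (t - 1)) * ((p i - q i) * ((p i + q i) / (2 * q i)) powr (t - 1)) = q i * (cG * G (x i))"
        unfolding a b c G_def cG_def by simp
    qed
    finally show ?thesis .
  qed
  have sx: "(\<Sum>i<n. q i *\<^sub>R x i) = 1"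
  proof -
    have "(\<Sum>i<n. q i *\<^sub>R x i) = (\<Sum>i<n. p i)"
    proof (rule sum.cong[OF refl])
      fix i assume "i \<in> {..<n}"
      then have "q i > 0" using qp by auto
      then show "q i *\<^sub>R x i = p i" by (simp add: x_def)
    qed
    then show ?thesis using sp by simp
  qed
  have F1: "F 1 = 0" and G1: "G 1 = 0" by (simp_all add: F_def G_def)
  have ne: "{..<n} \<noteq> {}" proof - have "0 \<in> {..<n}" using assms(1) by simp then show ?thesis by blast qed
  have dF': "((\<lambda>y. cF * F y) has_real_derivative cF * (-((1 + y) powr ((s - 1) - 1) * y powr (-(s - 1) - 1) * (y^2 + (1 - (s - 1)) * y + (s - 1))))) (at y)"
    if "y > 0" for y
    unfolding F_def by (rule DERIV_cmult[OF dF[OF that]])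
  have dF'': "((\<lambda>y. cF * (-((1 + y) powr ((s - 1) - 1) * y powr (-(s - 1) - 1) * (y^2 + (1 - (s - 1)) * y + (s - 1))))) has_real_derivative
       cF * ((1 + y) powr (s - 1 - 2) * y powr (- (s - 1) - 2) * (s - 1) * ((3 - (s - 1)) * y + ((s - 1) + 1)))) (at y)"
    if "y > 0" for y
    by (rule DERIV_cmult[OF dF2[OF that]])
  have dG': "((\<lambda>y. cG * G y) has_real_derivative cG * ((1 + y) powr (t - 2) * (t * y + 2 - t))) (at y)"
    if "y > 0" for y
    unfolding G_def by (rule DERIV_cmult[OF dG[OF that]])
  have dG'': "((\<lambda>y. cG * ((1 + y) powr (t - 2) * (t * y + 2 - t))) has_real_derivative cG * ((1 + y) powr (t - 3) * (t - 1) * (t * y + 4 - t))) (at y)"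
    if "y > 0" for y
    by (rule DERIV_cmult[OF dG2[OF that]])
  have B0: "t * y + 4 - t > 0" if "y > 0" for y
  proof -
    have "t * y > 0" using that ab by simp
    then show ?thesis using ab by linarith
  qed
  have G''pos: "cG * ((1 + y) powr (t - 3) * (t - 1) * (t * y + 4 - t)) \<ge> 0" if "y > 0" for y
    using cG0 t1 B0[OF that] that by auto
  have K: "cF * ((1 + y) powr (s - 1 - 2) * y powr (- (s - 1) - 2) * (s - 1) * ((3 - (s - 1)) * y + ((s - 1) + 1)))
     = phi s t y * (cG * ((1 + y) powr (t - 3) * (t - 1) * (t * y + 4 - t)))" if "y > 0" for y
    using Fdd[OF that s1(1), of t] t1 B0[OF that] unfolding cF_def cG_def by (simp add: mult.assoc)
  have ypos: "y > 0" if "y \<in> {r..R}" for y using that assms(4) by auto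
  have low: "phi s t R * zeta n t p q \<le> zeta n s q p"
  proof -
    let ?m = "phi s t R"
    have cvx: "convex_on {r..R} (\<lambda>y. cF * F y - ?m * (cG * G y))"
    proof (rule f''_ge0_imp_convex[where f' = "\<lambda>y. cF * (-((1 + y) powr ((s - 1) - 1) * y powr (-(s - 1) - 1) * (y^2 + (1 - (s - 1)) * y + (s - 1)))) - ?m * (cG * ((1 + y) powr (t - 2) * (t * y + 2 - t)))"
        and f'' = "\<lambda>y. cF * ((1 + y) powr (s - 1 - 2) * y powr (- (s - 1) - 2) * (s - 1) * ((3 - (s - 1)) * y + ((s - 1) + 1))) - ?m * (cG * ((1 + y) powr (t - 3) * (t - 1) * (t * y + 4 - t)))"])
      show "convex {r..R}" by simp
      fix y assume y: "y \<in> {r..R}"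
      then have y0: "y > 0" by (rule ypos)
      show "((\<lambda>y. cF * F y - ?m * (cG * G y)) has_real_derivative
          cF * (-((1 + y) powr ((s - 1) - 1) * y powr (-(s - 1) - 1) * (y^2 + (1 - (s - 1)) * y + (s - 1)))) - ?m * (cG * ((1 + y) powr (t - 2) * (t * y + 2 - t)))) (at y)"
        by (rule DERIV_diff[OF dF'[OF y0] DERIV_cmult[OF dG'[OF y0]]])
      show "((\<lambda>y. cF * (-((1 + y) powr ((s - 1) - 1) * y powr (-(s - 1) - 1) * (y^2 + (1 - (s - 1)) * y + (s - 1)))) - ?m * (cG * ((1 + y) powr (t - 2) * (t * y + 2 - t)))) has_real_derivative
          cF * ((1 + y) powr (s - 1 - 2) * y powr (- (s - 1) - 2) * (s - 1) * ((3 - (s - 1)) * y + ((s - 1) + 1))) - ?m * (cG * ((1 + y) powr (t - 3) * (t - 1) * (t * y + 4 - t)))) (at y)"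
        by (rule DERIV_diff[OF dF''[OF y0] DERIV_cmult[OF dG''[OF y0]]])
      have "?m \<le> phi s t y" using y y0 ab by (intro phi_mono) auto
      then show "0 \<le> cF * ((1 + y) powr (s - 1 - 2) * y powr (- (s - 1) - 2) * (s - 1) * ((3 - (s - 1)) * y + ((s - 1) + 1))) - ?m * (cG * ((1 + y) powr (t - 3) * (t - 1) * (t * y + 4 - t)))"
        unfolding K[OF y0] using G''pos[OF y0] by (simp add: mult_right_mono flip: left_diff_distrib)
    qed
    have "(\<lambda>y. cF * F y - ?m * (cG * G y)) (\<Sum>i<n. q i *\<^sub>R x i) \<le> (\<Sum>i<n. q i * (\<lambda>y. cF * F y - ?m * (cG * G y)) (x i))"
      by (rule convex_on_sum[OF _ ne cvx sq]) (use xC in \<open>auto intro: less_imp_le[OF qp]\<close>)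
    then have "0 \<le> (\<Sum>i<n. q i * (cF * F (x i)) - ?m * (q i * (cG * G (x i))))"
      unfolding sx using F1 G1 by (simp add: algebra_simps)
    then show ?thesis unfolding Z1 Z2 by (simp add: sum_subtractf sum_distrib_left)
  qed
  have up: "zeta n s q p \<le> phi s t r * zeta n t p q"
  proof -
    let ?m = "phi s t r"
    have cvx: "convex_on {r..R} (\<lambda>y. ?m * (cG * G y) - cF * F y)"
    proof (rule f''_ge0_imp_convex[where f' = "\<lambda>y. ?m * (cG * ((1 + y) powr (t - 2) * (t * y + 2 - t))) - cF * (-((1 + y) powr ((s - 1) - 1) * y powr (-(s - 1) - 1) * (y^2 + (1 - (s - 1)) * y + (s - 1))))"
        and f'' = "\<lambda>y. ?m * (cG * ((1 + y) powr (t - 3) * (t - 1) * (t * y + 4 - t))) - cF * ((1 + y) powr (s - 1 - 2) * y powr (- (s - 1) - 2) * (s - 1) * ((3 - (s - 1)) * y + ((s - 1) + 1)))"])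
      show "convex {r..R}" by simp
      fix y assume y: "y \<in> {r..R}"
      then have y0: "y > 0" by (rule ypos)
      show "((\<lambda>y. ?m * (cG * G y) - cF * F y) has_real_derivative
          ?m * (cG * ((1 + y) powr (t - 2) * (t * y + 2 - t))) - cF * (-((1 + y) powr ((s - 1) - 1) * y powr (-(s - 1) - 1) * (y^2 + (1 - (s - 1)) * y + (s - 1))))) (at y)"
        by (rule DERIV_diff[OF DERIV_cmult[OF dG'[OF y0]] dF'[OF y0]])
      show "((\<lambda>y. ?m * (cG * ((1 + y) powr (t - 2) * (t * y + 2 - t))) - cF * (-((1 + y) powr ((s - 1) - 1) * y powr (-(s - 1) - 1) * (y^2 + (1 - (s - 1)) * y + (s - 1))))) has_real_derivative
          ?m * (cG * ((1 + y) powr (t - 3) * (t - 1) * (t * y + 4 - t))) - cF * ((1 + y) powr (s - 1 - 2) * y powr (- (s - 1) - 2) * (s - 1) * ((3 - (s - 1)) * y + ((s - 1) + 1)))) (at y)"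
        by (rule DERIV_diff[OF DERIV_cmult[OF dG''[OF y0]] dF''[OF y0]])
      have "phi s t y \<le> ?m" using y y0 ab assms(4) by (intro phi_mono) auto
      then show "0 \<le> ?m * (cG * ((1 + y) powr (t - 3) * (t - 1) * (t * y + 4 - t))) - cF * ((1 + y) powr (s - 1 - 2) * y powr (- (s - 1) - 2) * (s - 1) * ((3 - (s - 1)) * y + ((s - 1) + 1)))"
        unfolding K[OF y0] using G''pos[OF y0] by (simp add: mult_right_mono flip: left_diff_distrib)
    qed
    have "(\<lambda>y. ?m * (cG * G y) - cF * F y) (\<Sum>i<n. q i *\<^sub>R x i) \<le> (\<Sum>i<n. q i * (\<lambda>y. ?m * (cG * G y) - cF * F y) (x i))"
      by (rule convex_on_sum[OF _ ne cvx sq]) (use xC in \<open>auto intro: less_imp_le[OF qp]\<close>)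
    then have "0 \<le> (\<Sum>i<n. ?m * (q i * (cG * G (x i))) - q i * (cF * F (x i)))"
      unfolding sx using F1 G1 by (simp add: algebra_simps)
    then show ?thesis unfolding Z1 Z2 by (simp add: sum_subtractf sum_distrib_left)
  qed
  show ?thesis using low up unfolding phi_def by simp
qed

end
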